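(* Let $U,V,X$ be random variables with $U,V$ taking values in finite sets $\mathcal{U},\mathcal{V}$ and $X$ taking values in $\mathcal{X}=\{0,1,\dots,m-1\}$. Define random variables $U^*$ on $\mathcal{U}\times\{0,\dots,m-1\}$, $V^*$ on $\mathcal{V}\times\{0,\dots,m-1\}$ and $X^*$ on $\mathcal{X}$ (writing $u_i=(u,i)$, $v_j=(v,j)$) by $$P(U^*=u_i,V^*=v_j)=\tfrac1m P(U=u,V=v,X=(i-j)_m),$$ $$P(X^*=k\mid U^*=u_i,V^*=v_j)=\begin{cases}1 & k=(i-j)_m\\ 0&\text{otherwise,}\end{cases}$$ where $(l)_m$ denotes the remainder of $l$ modulo $m$. Then for all $u\in\mathcal{U}$, $v\in\mathcal{V}$ and $0\le i,k\le m-1$: (i) $P(U^*=u_i)=\frac1m P(U=u)$; (ii) $P(V^*=v_i)=\frac1m P(V=v)$; (iii) $P(X^*=k\mid U^*=u_i)=P(X=k\mid U=u)$ whenever $P(U=u)>0$; (iv) $P(X^*=k\mid V^*=v_i)=P(X=k\mid V=v)$ whenever $P(V=v)>0$. *)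

theory Defs
  imports "HOL-Probability.Probability"
begin

definition rem_mod :: "nat \<Rightarrow> int \<Rightarrow> nat" where
  "rem_mod m l = nat (l mod int m)"

end

theory Submission imports Defs begin

lemma decomp:
  fixes p :: "'a pmf" and f :: "'a \<Rightarrow> 'b"
  assumes "finite I" "\<forall>\<omega>\<in>set_pmf p. f \<omega> \<in> I"
  shows "measure_pmf.prob p {\<omega>. A \<omega>} = (\<Sum>b\<in>I. measure_pmf.prob p {\<omega>. A \<omega> \<and> f \<omega> = b})"
proof -
  have "measure_pmf.prob p {\<omega>. A \<omega>} = measure_pmf.prob p ({\<omega>. A \<omega>} \<inter> set_pmf p)"
    by (simp add: measure_Int_set_pmf)
  also have "{\<omega>. A \<omega>} \<inter> set_pmf p = (\<Union>b\<in>I. {\<omega>. A \<omega> \<and> f \<omega> = b}) \<inter> set_pmf p"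
    using assms(2) by auto
  also have "measure_pmf.prob p \<dots> = measure_pmf.prob p (\<Union>b\<in>I. {\<omega>. A \<omega> \<and> f \<omega> = b})"
    by (simp add: measure_Int_set_pmf)
  also have "\<dots> = (\<Sum>b\<in>I. measure_pmf.prob p {\<omega>. A \<omega> \<and> f \<omega> = b})"
  proof (rule measure_pmf.finite_measure_finite_Union)
    show "finite I" by (rule assms(1))
    show "(\<lambda>b. {\<omega>. A \<omega> \<and> f \<omega> = b}) ` I \<subseteq> sets (measure_pmf p)" by simp
    show "disjoint_family_on (\<lambda>b. {\<omega>. A \<omega> \<and> f \<omega> = b}) I"
      unfolding disjoint_family_on_def by blast
  qed
  finally show ?thesis .
qed

lemma rem_mod_lt: "0 < m \<Longrightarrow> rem_mod m l < m"
proof -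
  assume m: "0 < m"
  have "l mod int m < int m" using m by simp
  moreover have "0 \<le> l mod int m" using m by simp
  ultimately show ?thesis unfolding rem_mod_def by linarith
qed

lemma rem_mod_inj:
  assumes m: "0 < m" and e: "rem_mod m x = rem_mod m y"
  shows "x mod int m = y mod int m"
proof -
  have "0 \<le> x mod int m" "0 \<le> y mod int m" using m by simp_all
  thus ?thesis using e unfolding rem_mod_def by simp
qed

lemma rem_bij1:
  assumes "i < m"
  shows "bij_betw (\<lambda>j. rem_mod m (int i - int j)) {..<m} {..<m}"
proof -
  have m: "0 < m" using assms by simp
  have inj: "inj_on (\<lambda>j. rem_mod m (int i - int j)) {..<m}"
  proof (rule inj_onI)
    fix a b assume a: "a \<in> {..<m}" and b: "b \<in> {..<m}"
      and e: "rem_mod m (int i - int a) = rem_mod m (int i - int b)"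
    have h: "(int i - int a) mod int m = (int i - int b) mod int m"
      by (rule rem_mod_inj[OF m e])
    have "int a = (int i - (int i - int a)) mod int m" using a by simp
    also have "\<dots> = (int i - (int i - int a) mod int m) mod int m" by (simp only: mod_diff_right_eq)
    also have "\<dots> = (int i - (int i - int b) mod int m) mod int m" by (simp only: h)
    also have "\<dots> = (int i - (int i - int b)) mod int m" by (simp only: mod_diff_right_eq)
    also have "\<dots> = int b" using b by simp
    finally show "a = b" by simp
  qed
  have sub: "(\<lambda>j. rem_mod m (int i - int j)) ` {..<m} \<subseteq> {..<m}"
    using rem_mod_lt[OF m] by blast
  show ?thesis unfolding bij_betw_def using endo_inj_surj[OF _ sub inj] inj by simp
qed

lemma rem_bij2:
  assumes "i < m"
  shows "bij_betw (\<lambda>j. rem_mod m (int j - int i)) {..<m} {..<m}"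
proof -
  have m: "0 < m" using assms by simp
  have inj: "inj_on (\<lambda>j. rem_mod m (int j - int i)) {..<m}"
  proof (rule inj_onI)
    fix a b assume a: "a \<in> {..<m}" and b: "b \<in> {..<m}"
      and e: "rem_mod m (int a - int i) = rem_mod m (int b - int i)"
    have h: "(int a - int i) mod int m = (int b - int i) mod int m"
      by (rule rem_mod_inj[OF m e])
    have "int a = ((int a - int i) + int i) mod int m" using a by simp
    also have "\<dots> = ((int a - int i) mod int m + int i) mod int m" by (simp only: mod_add_left_eq)
    also have "\<dots> = ((int b - int i) mod int m + int i) mod int m" by (simp only: h)
    also have "\<dots> = ((int b - int i) + int i) mod int m" by (simp only: mod_add_left_eq)
    also have "\<dots> = int b" using b by simp
    finally show "a = b" by simp
  qed
  have sub: "(\<lambda>j. rem_mod m (int j - int i)) ` {..<m} \<subseteq> {..<m}"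
    using rem_mod_lt[OF m] by blast
  show ?thesis unfolding bij_betw_def using endo_inj_surj[OF _ sub inj] inj by simp
qed

lemma reidx1: "i < m \<Longrightarrow> (\<Sum>j<m. g (rem_mod m (int i - int j))) = (\<Sum>x<m. (g x :: real))"
  using sum.reindex_bij_betw[OF rem_bij1, of i m g] by simp
lemma reidx2: "i < m \<Longrightarrow> (\<Sum>j<m. g (rem_mod m (int j - int i))) = (\<Sum>x<m. (g x :: real))"
  using sum.reindex_bij_betw[OF rem_bij2, of i m g] by simp

theorem lemma3p3:
  fixes m :: nat
    and P :: "('u::finite \<times> 'v::finite \<times> nat) pmf"
    and Q :: "(('u \<times> nat) \<times> ('v \<times> nat) \<times> nat) pmf"
  assumes m_pos: "m \<ge> 1"
    and X_range: "\<forall>(u, v, x) \<in> set_pmf P. x < m"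
    and star_range: "\<forall>((u, i), (v, j), k) \<in> set_pmf Q. i < m \<and> j < m \<and> k < m"
    and joint_UV: "\<And>u v i j. i < m \<Longrightarrow> j < m \<Longrightarrow>
        \<P>(\<omega> in measure_pmf Q. fst \<omega> = (u, i) \<and> fst (snd \<omega>) = (v, j))
          = (1 / real m) * \<P>(\<omega> in measure_pmf P. fst \<omega> = u \<and> fst (snd \<omega>) = v
                                   \<and> snd (snd \<omega>) = rem_mod m (int i - int j))"
    and cond_X: "\<And>u v i j k. i < m \<Longrightarrow> j < m \<Longrightarrow> k < m \<Longrightarrow>
        \<P>(\<omega> in measure_pmf Q. fst \<omega> = (u, i) \<and> fst (snd \<omega>) = (v, j)) > 0 \<Longrightarrow>
        \<P>(\<omega> in measure_pmf Q. snd (snd \<omega>) = k \<bar> fst \<omega> = (u, i) \<and> fst (snd \<omega>) = (v, j))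
          = (if k = rem_mod m (int i - int j) then 1 else 0)"
  shows "(\<forall>u i. i < m \<longrightarrow>
           \<P>(\<omega> in measure_pmf Q. fst \<omega> = (u, i)) = (1 / real m) * \<P>(\<omega> in measure_pmf P. fst \<omega> = u)) \<and>
         (\<forall>v i. i < m \<longrightarrow>
           \<P>(\<omega> in measure_pmf Q. fst (snd \<omega>) = (v, i)) = (1 / real m) * \<P>(\<omega> in measure_pmf P. fst (snd \<omega>) = v)) \<and>
         (\<forall>u i k. i < m \<longrightarrow> k < m \<longrightarrow> \<P>(\<omega> in measure_pmf P. fst \<omega> = u) > 0 \<longrightarrow>
           \<P>(\<omega> in measure_pmf Q. snd (snd \<omega>) = k \<bar> fst \<omega> = (u, i))
             = \<P>(\<omega> in measure_pmf P. snd (snd \<omega>) = k \<bar> fst \<omega> = u)) \<and>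
         (\<forall>v i k. i < m \<longrightarrow> k < m \<longrightarrow> \<P>(\<omega> in measure_pmf P. fst (snd \<omega>) = v) > 0 \<longrightarrow>
           \<P>(\<omega> in measure_pmf Q. snd (snd \<omega>) = k \<bar> fst (snd \<omega>) = (v, i))
             = \<P>(\<omega> in measure_pmf P. snd (snd \<omega>) = k \<bar> fst (snd \<omega>) = v))"
proof -
  let ?pQ = "\<lambda>u i v j. measure_pmf.prob Q {\<omega>. fst \<omega> = (u, i) \<and> fst (snd \<omega>) = (v, j)}"
  let ?pP = "\<lambda>u v x. measure_pmf.prob P {\<omega>. fst \<omega> = u \<and> fst (snd \<omega>) = v \<and> snd (snd \<omega>) = x}"
  have mpos: "real m > 0" using m_pos by simp
  have jUV: "?pQ u i v j = (1 / real m) * ?pP u v (rem_mod m (int i - int j))"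
    if "i < m" "j < m" for u i v j using joint_UV[OF that] by simp
  have setQ: "fst (snd \<omega>) \<in> UNIV \<times> {..<m}" "fst \<omega> \<in> UNIV \<times> {..<m}"
    if "\<omega> \<in> set_pmf Q" for \<omega>
  proof -
    obtain u i v j k where w: "\<omega> = ((u,i),(v,j),k)" by (metis prod.collapse)
    show "fst (snd \<omega>) \<in> UNIV \<times> {..<m}" "fst \<omega> \<in> UNIV \<times> {..<m}"
      using star_range that unfolding w by auto
  qed
  have setP: "snd \<omega> \<in> UNIV \<times> {..<m}" if "\<omega> \<in> set_pmf P" for \<omega>
  proof -
    obtain u v x where w: "\<omega> = (u,v,x)" by (metis prod.collapse)
    show ?thesis using X_range that unfolding w by auto
  qed
  have termQ: "measure_pmf.prob Q {\<omega>. snd (snd \<omega>) = k \<and> fst \<omega> = (u, i) \<and> fst (snd \<omega>) = (v, j)}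
      = (if k = rem_mod m (int i - int j) then (1 / real m) * ?pP u v (rem_mod m (int i - int j)) else 0)"
    if ij: "i < m" "j < m" "k < m" for u v i j k
  proof -
    let ?t = "measure_pmf.prob Q {\<omega>. snd (snd \<omega>) = k \<and> fst \<omega> = (u, i) \<and> fst (snd \<omega>) = (v, j)}"
    let ?c = "(if k = rem_mod m (int i - int j) then 1 else 0) :: real"
    have tc: "?t = ?c * ?pQ u i v j"
    proof (cases "?pQ u i v j > 0")
      case True
      have "cond_prob (measure_pmf Q) (\<lambda>\<omega>. snd (snd \<omega>) = k) (\<lambda>\<omega>. fst \<omega> = (u, i) \<and> fst (snd \<omega>) = (v, j)) = ?c"
        using cond_X[OF ij] True by simp
      hence eq: "?t / ?pQ u i v j = ?c"
        unfolding cond_prob_def space_measure_pmf by simp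
      have ne: "?pQ u i v j \<noteq> 0" using True by linarith
      show ?thesis using eq nonzero_divide_eq_eq[OF ne] by simp
    next
      case False
      have n1: "0 \<le> ?pQ u i v j" by (rule measure_nonneg)
      have z: "?pQ u i v j = 0" using False n1 by linarith
      have le: "?t \<le> ?pQ u i v j"
        by (rule measure_pmf.finite_measure_mono) auto
      have n2: "0 \<le> ?t" by (rule measure_nonneg)
      have "?t = 0" using le n2 z by linarith
      thus ?thesis using z by simp
    qed
    show ?thesis unfolding tc jUV[OF ij(1,2)] by simp
  qed
  have margP: "measure_pmf.prob P {\<omega>. fst \<omega> = u} = (\<Sum>v\<in>UNIV. \<Sum>x<m. ?pP u v x)" for u
  proof -
    have "measure_pmf.prob P {\<omega>. fst \<omega> = u} = (\<Sum>b\<in>UNIV \<times> {..<m}. measure_pmf.prob P {\<omega>. fst \<omega> = u \<and> snd \<omega> = b})"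
      by (rule decomp) (use setP in auto)
    also have "\<dots> = (\<Sum>(v,x)\<in>UNIV \<times> {..<m}. ?pP u v x)"
      by (intro sum.cong refl) (auto intro!: arg_cong[where f="measure_pmf.prob P"])
    also have "\<dots> = (\<Sum>v\<in>UNIV. \<Sum>x<m. ?pP u v x)"
      by (rule sum.cartesian_product[symmetric])
    finally show ?thesis .
  qed
  have margP2: "measure_pmf.prob P {\<omega>. fst (snd \<omega>) = v} = (\<Sum>u\<in>UNIV. \<Sum>x<m. ?pP u v x)" for v
  proof -
    have "measure_pmf.prob P {\<omega>. fst (snd \<omega>) = v} = (\<Sum>b\<in>UNIV \<times> {..<m}. measure_pmf.prob P {\<omega>. fst (snd \<omega>) = v \<and> (fst \<omega>, snd (snd \<omega>)) = b})"
      by (rule decomp) (use setP in auto)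
    also have "\<dots> = (\<Sum>(u,x)\<in>UNIV \<times> {..<m}. ?pP u v x)"
      by (intro sum.cong refl) (auto intro!: arg_cong[where f="measure_pmf.prob P"])
    also have "\<dots> = (\<Sum>u\<in>UNIV. \<Sum>x<m. ?pP u v x)"
      by (rule sum.cartesian_product[symmetric])
    finally show ?thesis .
  qed
  have I: "measure_pmf.prob Q {\<omega>. fst \<omega> = (u, i)} = (1 / real m) * measure_pmf.prob P {\<omega>. fst \<omega> = u}"
    if "i < m" for u i
  proof -
    have "measure_pmf.prob Q {\<omega>. fst \<omega> = (u, i)} = (\<Sum>b\<in>UNIV \<times> {..<m}. measure_pmf.prob Q {\<omega>. fst \<omega> = (u, i) \<and> fst (snd \<omega>) = b})"
      by (rule decomp) (use setQ in auto)
    also have "\<dots> = (\<Sum>(v,j)\<in>UNIV \<times> {..<m}. (1 / real m) * ?pP u v (rem_mod m (int i - int j)))"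
      by (intro sum.cong refl) (auto simp: jUV that)
    also have "\<dots> = (\<Sum>v\<in>UNIV. \<Sum>j<m. (1 / real m) * ?pP u v (rem_mod m (int i - int j)))"
      by (rule sum.cartesian_product[symmetric])
    also have "\<dots> = (\<Sum>v\<in>UNIV. \<Sum>x<m. (1 / real m) * ?pP u v x)"
      by (intro sum.cong refl reidx1[OF that])
    also have "\<dots> = (1 / real m) * measure_pmf.prob P {\<omega>. fst \<omega> = u}"
      by (simp add: margP sum_distrib_left)
    finally show ?thesis .
  qed
  have II: "measure_pmf.prob Q {\<omega>. fst (snd \<omega>) = (v, i)} = (1 / real m) * measure_pmf.prob P {\<omega>. fst (snd \<omega>) = v}"
    if "i < m" for v i
  proof -
    have "measure_pmf.prob Q {\<omega>. fst (snd \<omega>) = (v, i)} = (\<Sum>b\<in>UNIV \<times> {..<m}. measure_pmf.prob Q {\<omega>. fst (snd \<omega>) = (v, i) \<and> fst \<omega> = b})"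
      by (rule decomp) (use setQ in \<open>auto simp: mem_Times_iff\<close>)
    also have "\<dots> = (\<Sum>(u,j)\<in>UNIV \<times> {..<m}. (1 / real m) * ?pP u v (rem_mod m (int j - int i)))"
    proof (rule sum.cong[OF refl])
      fix p assume p: "p \<in> (UNIV :: 'u set) \<times> {..<m}"
      obtain u j where pv: "p = (u, j)" by (cases p)
      have "j < m" using p pv by simp
      have "{\<omega>. fst (snd \<omega>) = (v, i) \<and> fst \<omega> = (u, j)}
         = {\<omega>. fst \<omega> = (u, j) \<and> fst (snd \<omega>) = (v, i)}" (is "_ = ?S") by blast
      hence se: "measure_pmf.prob Q {\<omega>. fst (snd \<omega>) = (v, i) \<and> fst \<omega> = (u, j)} = measure_pmf.prob Q ?S" by (rule arg_cong)
      show "measure_pmf.prob Q {\<omega>. fst (snd \<omega>) = (v, i) \<and> fst \<omega> = p}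
        = (case p of (u, j) \<Rightarrow> (1 / real m) * ?pP u v (rem_mod m (int j - int i)))"
        unfolding pv prod.case se using jUV[of j i u v] that \<open>j < m\<close> by simp
    qed
    also have "\<dots> = (\<Sum>u\<in>UNIV. \<Sum>j<m. (1 / real m) * ?pP u v (rem_mod m (int j - int i)))"
      by (rule sum.cartesian_product[symmetric])
    also have "\<dots> = (\<Sum>u\<in>UNIV. \<Sum>x<m. (1 / real m) * ?pP u v x)"
      by (intro sum.cong refl reidx2[OF that])
    also have "\<dots> = (1 / real m) * measure_pmf.prob P {\<omega>. fst (snd \<omega>) = v}"
      by (simp add: margP2 sum_distrib_left)
    finally show ?thesis .
  qed
  have III: "measure_pmf.prob Q {\<omega>. snd (snd \<omega>) = k \<and> fst \<omega> = (u, i)}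
      = (1 / real m) * measure_pmf.prob P {\<omega>. snd (snd \<omega>) = k \<and> fst \<omega> = u}"
    if "i < m" "k < m" for u i k
  proof -
    have "measure_pmf.prob Q {\<omega>. snd (snd \<omega>) = k \<and> fst \<omega> = (u, i)} = (\<Sum>b\<in>UNIV \<times> {..<m}. measure_pmf.prob Q {\<omega>. (snd (snd \<omega>) = k \<and> fst \<omega> = (u, i)) \<and> fst (snd \<omega>) = b})"
      by (rule decomp) (use setQ in auto)
    also have "\<dots> = (\<Sum>(v,j)\<in>UNIV \<times> {..<m}. (\<lambda>x. if k = x then (1 / real m) * ?pP u v x else 0) (rem_mod m (int i - int j)))"
    proof (rule sum.cong[OF refl])
      fix p assume p: "p \<in> (UNIV :: 'v set) \<times> {..<m}"
      obtain v j where pv: "p = (v, j)" by (cases p)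
      have "j < m" using p pv by simp
      thus "measure_pmf.prob Q {\<omega>. (snd (snd \<omega>) = k \<and> fst \<omega> = (u, i)) \<and> fst (snd \<omega>) = p}
        = (case p of (v, j) \<Rightarrow> (\<lambda>x. if k = x then (1 / real m) * ?pP u v x else 0) (rem_mod m (int i - int j)))"
        unfolding pv using termQ[of i j k u v] that by (simp add: conj_assoc)
    qed
    also have "\<dots> = (\<Sum>v\<in>UNIV. \<Sum>j<m. (\<lambda>x. if k = x then (1 / real m) * ?pP u v x else 0) (rem_mod m (int i - int j)))"
      by (rule sum.cartesian_product[symmetric])
    also have "\<dots> = (\<Sum>v\<in>UNIV. \<Sum>x<m. (\<lambda>x. if k = x then (1 / real m) * ?pP u v x else 0) x)"
      by (intro sum.cong refl reidx1[OF that(1)])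
    also have "\<dots> = (\<Sum>v\<in>UNIV. (1 / real m) * ?pP u v k)"
      using that by simp
    also have "\<dots> = (1 / real m) * (\<Sum>v\<in>UNIV. measure_pmf.prob P {\<omega>. (snd (snd \<omega>) = k \<and> fst \<omega> = u) \<and> fst (snd \<omega>) = v})"
    proof -
      have "\<And>v. ?pP u v k = measure_pmf.prob P {\<omega>. (snd (snd \<omega>) = k \<and> fst \<omega> = u) \<and> fst (snd \<omega>) = v}"
        by (intro arg_cong[where f="measure_pmf.prob P"]) auto
      thus ?thesis by (simp add: sum_distrib_left)
    qed
    also have "\<dots> = (1 / real m) * measure_pmf.prob P {\<omega>. snd (snd \<omega>) = k \<and> fst \<omega> = u}"
      by (subst decomp[where f="\<lambda>\<omega>. fst (snd \<omega>)" and I=UNIV]) auto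
    finally show ?thesis .
  qed
  have IV: "measure_pmf.prob Q {\<omega>. snd (snd \<omega>) = k \<and> fst (snd \<omega>) = (v, i)}
      = (1 / real m) * measure_pmf.prob P {\<omega>. snd (snd \<omega>) = k \<and> fst (snd \<omega>) = v}"
    if "i < m" "k < m" for v i k
  proof -
    have "measure_pmf.prob Q {\<omega>. snd (snd \<omega>) = k \<and> fst (snd \<omega>) = (v, i)} = (\<Sum>b\<in>UNIV \<times> {..<m}. measure_pmf.prob Q {\<omega>. (snd (snd \<omega>) = k \<and> fst (snd \<omega>) = (v, i)) \<and> fst \<omega> = b})"
      by (rule decomp) (use setQ in \<open>auto simp: mem_Times_iff\<close>)
    also have "\<dots> = (\<Sum>(u,j)\<in>UNIV \<times> {..<m}. (\<lambda>x. if k = x then (1 / real m) * ?pP u v x else 0) (rem_mod m (int j - int i)))"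
    proof (rule sum.cong[OF refl])
      fix p assume p: "p \<in> (UNIV :: 'u set) \<times> {..<m}"
      obtain u j where pv: "p = (u, j)" by (cases p)
      have "j < m" using p pv by simp
      have "{\<omega>. (snd (snd \<omega>) = k \<and> fst (snd \<omega>) = (v, i)) \<and> fst \<omega> = (u, j)}
         = {\<omega>. snd (snd \<omega>) = k \<and> fst \<omega> = (u, j) \<and> fst (snd \<omega>) = (v, i)}" (is "_ = ?S") by blast
      hence se: "measure_pmf.prob Q {\<omega>. (snd (snd \<omega>) = k \<and> fst (snd \<omega>) = (v, i)) \<and> fst \<omega> = (u, j)} = measure_pmf.prob Q ?S" by (rule arg_cong)
      show "measure_pmf.prob Q {\<omega>. (snd (snd \<omega>) = k \<and> fst (snd \<omega>) = (v, i)) \<and> fst \<omega> = p}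
        = (case p of (u, j) \<Rightarrow> (\<lambda>x. if k = x then (1 / real m) * ?pP u v x else 0) (rem_mod m (int j - int i)))"
        unfolding pv prod.case se using termQ[of j i k u v] that \<open>j < m\<close> by simp
    qed
    also have "\<dots> = (\<Sum>u\<in>UNIV. \<Sum>j<m. (\<lambda>x. if k = x then (1 / real m) * ?pP u v x else 0) (rem_mod m (int j - int i)))"
      by (rule sum.cartesian_product[symmetric])
    also have "\<dots> = (\<Sum>u\<in>UNIV. \<Sum>x<m. (\<lambda>x. if k = x then (1 / real m) * ?pP u v x else 0) x)"
      by (intro sum.cong refl reidx2[OF that(1)])
    also have "\<dots> = (\<Sum>u\<in>UNIV. (1 / real m) * ?pP u v k)"
      using that by simp
    also have "\<dots> = (1 / real m) * (\<Sum>u\<in>UNIV. measure_pmf.prob P {\<omega>. (snd (snd \<omega>) = k \<and> fst (snd \<omega>) = v) \<and> fst \<omega> = u})"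
    proof -
      have "\<And>u. ?pP u v k = measure_pmf.prob P {\<omega>. (snd (snd \<omega>) = k \<and> fst (snd \<omega>) = v) \<and> fst \<omega> = u}"
        by (intro arg_cong[where f="measure_pmf.prob P"]) auto
      thus ?thesis by (simp add: sum_distrib_left)
    qed
    also have "\<dots> = (1 / real m) * measure_pmf.prob P {\<omega>. snd (snd \<omega>) = k \<and> fst (snd \<omega>) = v}"
      by (subst decomp[where f="\<lambda>\<omega>. fst \<omega>" and I=UNIV]) auto
    finally show ?thesis .
  qed
  have III': "\<P>(\<omega> in measure_pmf Q. snd (snd \<omega>) = k \<bar> fst \<omega> = (u, i))
             = \<P>(\<omega> in measure_pmf P. snd (snd \<omega>) = k \<bar> fst \<omega> = u)"
    if "i < m" "k < m" for u i k
    unfolding cond_prob_def space_measure_pmf using III[OF that] I[OF that(1), of u] mpos by simp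
  have IV': "\<P>(\<omega> in measure_pmf Q. snd (snd \<omega>) = k \<bar> fst (snd \<omega>) = (v, i))
             = \<P>(\<omega> in measure_pmf P. snd (snd \<omega>) = k \<bar> fst (snd \<omega>) = v)"
    if "i < m" "k < m" for v i k
    unfolding cond_prob_def space_measure_pmf using IV[OF that] II[OF that(1), of v] mpos by simp
  show ?thesis
    unfolding space_measure_pmf using I II III' IV' by simp
qed

end
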